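(* Let $(X,\|\cdot\|)$ be a convex normed space and let $\{v_n\}_{n\in\mathbb{N}}\subset X$ be a sequence such that $\lim_{n\to\infty}\frac{v_n}{n}$ exists in $X$ and is not $0$. Then there exists $N_0$ such that $v_n\ne 0$ for $n>N_0$ and $\left\{\frac{v_n}{\|v_n\|}\right\}_{n>N_0}$ is a uniformly convex subset of $X$. Moreover, if $v_n\neq0$ for all $n\in\mathbb{N}$, then $\left\{\frac{v_n}{\|v_n\|}\right\}_{n\in\mathbb{N}}$ is a uniformly convex subset of $X$.
   Context: $\mathbb{N}=\{1,2,3,\dots\}$. A normed space $X$ is convex if for all $u,v\in X$ with $u\ne v$ and $\|u\|=\|v\|=1$ we have $\|u+v\|<2$. A subset $S\subset X$ is called uniformly convex if for every $\varepsilon>0$ there exists $\delta\in(0,1)$ such that for all $u,v\in S$ with $\|u\|=\|v\|=1$ and $\|u-v\|\ge\varepsilon$ we have $\|u+v\|\le 2-\delta$. *)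

theory Defs
  imports "HOL-Analysis.Analysis"
begin

definition convex_normed_space :: "'a::real_normed_vector itself \<Rightarrow> bool" where
  "convex_normed_space _ \<longleftrightarrow>
     (\<forall>u v::'a. u \<noteq> v \<and> norm u = 1 \<and> norm v = 1 \<longrightarrow> norm (u + v) < 2)"

definition uniformly_convex_set :: "'a::real_normed_vector set \<Rightarrow> bool" where
  "uniformly_convex_set S \<longleftrightarrow>
     (\<forall>\<epsilon>>0. \<exists>\<delta>. 0 < \<delta> \<and> \<delta> < 1 \<and>
        (\<forall>u\<in>S. \<forall>v\<in>S. norm u = 1 \<and> norm v = 1 \<and> norm (u - v) \<ge> \<epsilon>
            \<longrightarrow> norm (u + v) \<le> 2 - \<delta>))"

end

theory Submission
  imports Defs
begin

lemma compact_seq_limit_gen: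
  fixes f :: "nat \<Rightarrow> 'b::topological_space"
  assumes lim: "f \<longlonglongrightarrow> l"
  shows "compact (insert l (range f))"
proof (rule compactI)
  fix C assume op: "\<forall>t\<in>C. open t" and cov: "insert l (range f) \<subseteq> \<Union>C"
  then obtain U where U: "U \<in> C" "l \<in> U" by blast
  then have "open U" using op by blast
  then have "eventually (\<lambda>n. f n \<in> U) sequentially"
    using lim U(2) topological_tendstoD by blast
  then obtain N where N: "\<And>n. n \<ge> N \<Longrightarrow> f n \<in> U"
    unfolding eventually_sequentially by blast
  have "\<forall>n. \<exists>T\<in>C. f n \<in> T" using cov by blast
  then obtain T where T: "\<And>n. T n \<in> C" "\<And>n. f n \<in> T n" by metis
  show "\<exists>C'\<subseteq>C. finite C' \<and> insert l (range f) \<subseteq> \<Union>C'"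
  proof (intro exI[of _ "insert U (T ` {..<N})"] conjI)
    show "insert U (T ` {..<N}) \<subseteq> C" using U T by blast
    show "finite (insert U (T ` {..<N}))" by simp
    show "insert l (range f) \<subseteq> \<Union>(insert U (T ` {..<N}))"
    proof
      fix x assume "x \<in> insert l (range f)"
      then consider "x = l" | n where "x = f n" by blast
      then show "x \<in> \<Union>(insert U (T ` {..<N}))"
      proof cases
        case 1 then show ?thesis using U by blast
      next
        case (2 n) then show ?thesis
          using N[of n] T(2)[of n] by (cases "n < N") auto
      qed
    qed
  qed
qed

lemma uc_mono: "uniformly_convex_set S \<Longrightarrow> T \<subseteq> S \<Longrightarrow> uniformly_convex_set T"
  unfolding uniformly_convex_set_def by (meson subsetD)

lemma uc_compact:
  fixes K :: "'a::real_normed_vector set"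
  assumes cv: "convex_normed_space TYPE('a)" and K: "compact K"
  shows "uniformly_convex_set K"
  unfolding uniformly_convex_set_def
proof (intro allI impI)
  fix \<epsilon> :: real assume e: "\<epsilon> > 0"
  define P where "P = (K \<times> K) \<inter> {p. norm (fst p) = 1 \<and> norm (snd p) = 1 \<and> \<epsilon> \<le> norm (fst p - snd p)}"
  have cl: "closed {p::'a\<times>'a. norm (fst p) = 1 \<and> norm (snd p) = 1 \<and> \<epsilon> \<le> norm (fst p - snd p)}"
    by (intro closed_Collect_conj closed_Collect_eq closed_Collect_le continuous_intros)
  have cP: "compact P" unfolding P_def
    using compact_Times[OF K K] cl by (rule compact_Int_closed)
  show "\<exists>\<delta>>0. \<delta> < 1 \<and> (\<forall>u\<in>K. \<forall>v\<in>K. norm u = 1 \<and> norm v = 1 \<and> \<epsilon> \<le> norm (u - v) \<longrightarrow> norm (u + v) \<le> 2 - \<delta>)"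
  proof (cases "P = {}")
    case True
    show ?thesis
      by (rule exI[of _ "1/2"]) (use True in \<open>auto simp: P_def\<close>)
  next
    case False
    have "continuous_on P (\<lambda>p. norm (fst p + snd p))" by (intro continuous_intros)
    then obtain p where p: "p \<in> P" "\<And>q. q \<in> P \<Longrightarrow> norm (fst q + snd q) \<le> norm (fst p + snd p)"
      using compact_attains_sup[OF compact_continuous_image[OF _ cP] ] False
      by (metis (no_types, lifting) empty_is_image imageE imageI)
    have "fst p \<noteq> snd p" using p(1) e unfolding P_def by auto
    then have lt: "norm (fst p + snd p) < 2" using p(1) cv unfolding P_def convex_normed_space_def by auto
    show ?thesis
    proof (rule exI[of _ "min (1/2) (2 - norm (fst p + snd p))"], intro conjI ballI impI)
      fix u v assume "u \<in> K" "v \<in> K" "norm u = 1 \<and> norm v = 1 \<and> \<epsilon> \<le> norm (u - v)"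
      then have "(u, v) \<in> P" unfolding P_def by auto
      from p(2)[OF this] show "norm (u + v) \<le> 2 - min (1/2) (2 - norm (fst p + snd p))" by simp
    qed (use lt in auto)
  qed
qed

theorem mainTheorem8:
  fixes v :: "nat \<Rightarrow> 'a::real_normed_vector" and L :: 'a
  assumes "convex_normed_space TYPE('a)"
    and "(\<lambda>n. v n /\<^sub>R real n) \<longlonglongrightarrow> L"
    and "L \<noteq> 0"
  shows "(\<exists>N0. (\<forall>n>N0. v n \<noteq> 0) \<and>
            uniformly_convex_set ((\<lambda>n. v n /\<^sub>R norm (v n)) ` {n. n > N0}))
       \<and> ((\<forall>n\<ge>1. v n \<noteq> 0) \<longrightarrow>
            uniformly_convex_set ((\<lambda>n. v n /\<^sub>R norm (v n)) ` {n. n \<ge> 1}))"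
proof -
  let ?w = "\<lambda>n. v n /\<^sub>R norm (v n)"
  let ?u = "\<lambda>n. v n /\<^sub>R real n"
  have nL: "norm L > 0" using assms(3) by simp
  have t1: "(\<lambda>n. ?u n /\<^sub>R norm (?u n)) \<longlonglongrightarrow> L /\<^sub>R norm L"
    by (intro tendsto_intros assms(2)) (use nL in auto)
  have ev: "eventually (\<lambda>n. ?u n /\<^sub>R norm (?u n) = ?w n) sequentially"
    unfolding eventually_sequentially
  proof (intro exI[of _ 1] allI impI)
    fix n :: nat assume "n \<ge> 1"
    then have "real n > 0" by simp
    then show "?u n /\<^sub>R norm (?u n) = ?w n"
      by (simp add: divide_simps)
  qed
  have tw: "?w \<longlonglongrightarrow> L /\<^sub>R norm L"
    using tendsto_cong[OF ev] t1 by simp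
  have ucw: "uniformly_convex_set (insert (L /\<^sub>R norm L) (range ?w))"
    by (rule uc_compact[OF assms(1) compact_seq_limit_gen[OF tw]])
  have "eventually (\<lambda>n. norm (?u n) > 0) sequentially"
    using tendsto_norm[OF assms(2)] nL order_tendstoD(1) by blast
  then obtain N where N: "\<And>n. n \<ge> N \<Longrightarrow> norm (?u n) > 0"
    unfolding eventually_sequentially by blast
  have A: "\<forall>n>N. v n \<noteq> 0"
  proof (intro allI impI)
    fix n assume "n > N"
    then have "norm (?u n) > 0" using N[of n] by simp
    then show "v n \<noteq> 0" by auto
  qed
  show ?thesis
  proof (intro conjI impI exI[of _ N])
    show "\<forall>n>N. v n \<noteq> 0" by (rule A)
    show "uniformly_convex_set (?w ` {n. n > N})" by (rule uc_mono[OF ucw]) auto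
    show "uniformly_convex_set (?w ` {n. n \<ge> 1})" by (rule uc_mono[OF ucw]) auto
  qed
qed

end
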